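(* Let $L=\langle S,A,\to\rangle$ be a labelled transition system. For all $x,y\in\{o,b\}$ and $s,t\in S$, if $s\mathrel{\underline{\leftrightarrow}}_{(x,y)}t$ then $s\equiv_{E(x,y)}t$.
   Context: An LTS is $\langle S,A,\to\rangle$ with states $S$, actions $A$ containing the internal action $\tau$, and $\to\subseteq S\times A\times S$; write $s\xrightarrow{a}t$, and $\twoheadrightarrow$ for the reflexive-transitive closure of $\xrightarrow{\tau}$. For $R\subseteq S\times S$ and $s,s',t$: $s\twoheadrightarrow_{o,R,t}s'$ iff $s\twoheadrightarrow s'$; $s\twoheadrightarrow_{b,R,t}s'$ iff $s\twoheadrightarrow s'$, $t\,R\,s$ and $t\,R\,s'$. For $x,y\in\{o,b\}$, a symmetric $R$ is an $(x,y)$-generic bisimulation if whenever $s\,R\,t$ and $s\xrightarrow{a}s'$, either $a=\tau$ and $s'\,R\,t$, or there exist $t',t_1,t_2$ with $t\twoheadrightarrow_{x,R,s}t_1\xrightarrow{a}t_2\twoheadrightarrow_{y,R,s'}t'$ and $s'\,R\,t'$. $s\mathrel{\underline{\leftrightarrow}}_{(x,y)}t$ iff some $(x,y)$-generic bisimulation relates $s$ and $t$. Generic bisimulation game. Let $\frown,\smile$ be formal tags and $E\subseteq\{\frown,\smile\}$. Spoiler-owned configurations $\langle (s,t),c,m,r\rangle_S$ and Duplicator-owned $\langle (s,t),c,m,r\rangle_D$ have $(s,t)\in S\times S$, $c\in (A\times S)\cup\{\dagger\}$, $m\in (S\times\{\frown,\smile\})\cup\{\dagger\}$, $r\in\{*,\checkmark\}$.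 From $\langle (s,t),c,m,r\rangle_S$ Spoiler may: (S1) move to $\langle (s,t),c,m,*\rangle_D$ if $c\neq\dagger$; (S2a) for some $s\xrightarrow{a}s'$, move to $\langle (s,t),(a,s'),(t,\frown),*\rangle_D$ if $c=\dagger$; (S2b) for some $s\xrightarrow{a}s'$, move to $\langle (s,t),(a,s'),(t,\frown),\checkmark\rangle_D$ if $c\neq (a,s')$; (S3) for some $t\xrightarrow{a}t'$, move to $\langle (t,s),(a,t'),(s,\frown),\checkmark\rangle_D$. From $\langle (u,v),(a,u'),(\bar v,f),r\rangle_D$ Duplicator may: (D1) move to $\langle (u',\bar v),\dagger,\dagger,\checkmark\rangle_S$ if $a=\tau$; (D2) if $f=\frown$ and $\bar v\xrightarrow{a}v'$: (a) move to $\langle (u',v'),(a,u'),(v',\smile),*\rangle_S$, or (b) move to $\langle (u',v'),\dagger,\dagger,\checkmark\rangle_S$, or (c) only if $\smile\in E$, move to $\langle (u,v),(a,u'),(v',\smile),*\rangle_S$; (D3) for some $\bar v\xrightarrow{\tau}v'$: (a) move to $\langle (u,v'),(a,u'),(v',f),*\rangle_S$, or (b) only if $f=\smile$, move to $\langle (u',v'),\dagger,\dagger,\checkmark\rangle_S$, or (c) only if $f\in E$, move to $\langle (u,v),(a,u'),(v',f),*\rangle_S$. Duplicator wins a finite play if Spoiler gets stuck, and an infinite play if it has infinitely many $\checkmark$ rewards; other plays are won by Spoiler. $s\equiv_E t$ iff Duplicator has a strategy winning all plays from $\langle (s,t),\dagger,\dagger,*\rangle_S$. $E(x,y)$ is the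 smallest set with $\frown\in E(o,y)$ and $\smile\in E(x,o)$ for all $x,y\in\{o,b\}$. *)

theory Defs
  imports Main
begin

(* An LTS <S,A,->> is given by the state type 's, the action type 'a,
   a distinguished internal action tau :: 'a and a transition predicate
   tr :: 's => 'a => 's => bool  (tr s a t  means  s -a-> t). *)

datatype mode = Mo | Mb

definition taus :: "('s \<Rightarrow> 'a \<Rightarrow> 's \<Rightarrow> bool) \<Rightarrow> 'a \<Rightarrow> 's \<Rightarrow> 's \<Rightarrow> bool" where
  "taus tr tau = (\<lambda>u v. tr u tau v)\<^sup>*\<^sup>*"

(* wtau tr tau x R t s s'  means  s ->>_{x,R,t} s' *)
definition wtau :: "('s \<Rightarrow> 'a \<Rightarrow> 's \<Rightarrow> bool) \<Rightarrow> 'a \<Rightarrow> mode \<Rightarrow> ('s \<Rightarrow> 's \<Rightarrow> bool)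
    \<Rightarrow> 's \<Rightarrow> 's \<Rightarrow> 's \<Rightarrow> bool" where
  "wtau tr tau x R t s s' = (case x of
      Mo \<Rightarrow> taus tr tau s s'
    | Mb \<Rightarrow> taus tr tau s s' \<and> R t s \<and> R t s')"

definition generic_bisim :: "('s \<Rightarrow> 'a \<Rightarrow> 's \<Rightarrow> bool) \<Rightarrow> 'a \<Rightarrow> mode \<Rightarrow> mode
    \<Rightarrow> ('s \<Rightarrow> 's \<Rightarrow> bool) \<Rightarrow> bool" where
  "generic_bisim tr tau x y R \<longleftrightarrow>
     (\<forall>s t. R s t \<longrightarrow> R t s) \<and>
     (\<forall>s t a s'. R s t \<and> tr s a s' \<longrightarrow>
        (a = tau \<and> R s' t) \<or>
        (\<exists>t' t1 t2. wtau tr tau x R s t t1 \<and> tr t1 a t2 \<and> wtau tr tau y R s' t2 t' \<and> R s' t'))"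

definition gbisimilar :: "('s \<Rightarrow> 'a \<Rightarrow> 's \<Rightarrow> bool) \<Rightarrow> 'a \<Rightarrow> mode \<Rightarrow> mode \<Rightarrow> 's \<Rightarrow> 's \<Rightarrow> bool" where
  "gbisimilar tr tau x y s t \<longleftrightarrow> (\<exists>R. generic_bisim tr tau x y R \<and> R s t)"

datatype tag = Frown | Smile
datatype reward = Star | Check

(* None encodes the dagger symbol *)
datatype ('s, 'a) conf =
    SConf "'s \<times> 's" "('a \<times> 's) option" "('s \<times> tag) option" reward
  | DConf "'s \<times> 's" "('a \<times> 's) option" "('s \<times> tag) option" reward

fun is_D :: "('s, 'a) conf \<Rightarrow> bool" where
  "is_D (SConf _ _ _ _) = False"
| "is_D (DConf _ _ _ _) = True"

fun rew :: "('s, 'a) conf \<Rightarrow> reward" where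
  "rew (SConf _ _ _ r) = r"
| "rew (DConf _ _ _ r) = r"

inductive gmove :: "('s \<Rightarrow> 'a \<Rightarrow> 's \<Rightarrow> bool) \<Rightarrow> 'a \<Rightarrow> tag set
    \<Rightarrow> ('s, 'a) conf \<Rightarrow> ('s, 'a) conf \<Rightarrow> bool"
  for tr :: "'s \<Rightarrow> 'a \<Rightarrow> 's \<Rightarrow> bool" and tau :: 'a and E :: "tag set" where
  S1: "c \<noteq> None \<Longrightarrow> gmove tr tau E (SConf (s,t) c m r) (DConf (s,t) c m Star)"
| S2a: "c = None \<Longrightarrow> tr s a s' \<Longrightarrow>
        gmove tr tau E (SConf (s,t) c m r) (DConf (s,t) (Some (a,s')) (Some (t,Frown)) Star)"
| S2b: "c \<noteq> Some (a,s') \<Longrightarrow> tr s a s' \<Longrightarrow>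
        gmove tr tau E (SConf (s,t) c m r) (DConf (s,t) (Some (a,s')) (Some (t,Frown)) Check)"
| S3: "tr t a t' \<Longrightarrow>
        gmove tr tau E (SConf (s,t) c m r) (DConf (t,s) (Some (a,t')) (Some (s,Frown)) Check)"
| D1: "a = tau \<Longrightarrow>
        gmove tr tau E (DConf (u,v) (Some (a,u')) (Some (vb,f)) r) (SConf (u',vb) None None Check)"
| D2a: "f = Frown \<Longrightarrow> tr vb a v' \<Longrightarrow>
        gmove tr tau E (DConf (u,v) (Some (a,u')) (Some (vb,f)) r)
                       (SConf (u',v') (Some (a,u')) (Some (v',Smile)) Star)"
| D2b: "f = Frown \<Longrightarrow> tr vb a v' \<Longrightarrow>
        gmove tr tau E (DConf (u,v) (Some (a,u')) (Some (vb,f)) r) (SConf (u',v') None None Check)"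
| D2c: "f = Frown \<Longrightarrow> tr vb a v' \<Longrightarrow> Smile \<in> E \<Longrightarrow>
        gmove tr tau E (DConf (u,v) (Some (a,u')) (Some (vb,f)) r)
                       (SConf (u,v) (Some (a,u')) (Some (v',Smile)) Star)"
| D3a: "tr vb tau v' \<Longrightarrow>
        gmove tr tau E (DConf (u,v) (Some (a,u')) (Some (vb,f)) r)
                       (SConf (u,v') (Some (a,u')) (Some (v',f)) Star)"
| D3b: "tr vb tau v' \<Longrightarrow> f = Smile \<Longrightarrow>
        gmove tr tau E (DConf (u,v) (Some (a,u')) (Some (vb,f)) r) (SConf (u',v') None None Check)"
| D3c: "tr vb tau v' \<Longrightarrow> f \<in> E \<Longrightarrow>
        gmove tr tau E (DConf (u,v) (Some (a,u')) (Some (vb,f)) r)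
                       (SConf (u,v) (Some (a,u')) (Some (v',f)) Star)"

(* Duplicator strategies are history dependent: a strategy maps a nonempty
   history (list of configurations, current one last) to the next configuration. *)
type_synonym ('s, 'a) strategy = "('s, 'a) conf list \<Rightarrow> ('s, 'a) conf"

definition fin_play :: "('s \<Rightarrow> 'a \<Rightarrow> 's \<Rightarrow> bool) \<Rightarrow> 'a \<Rightarrow> tag set \<Rightarrow> ('s, 'a) strategy
    \<Rightarrow> ('s, 'a) conf \<Rightarrow> ('s, 'a) conf list \<Rightarrow> bool" where
  "fin_play tr tau E \<sigma> g0 xs \<longleftrightarrow> xs \<noteq> [] \<and> hd xs = g0 \<and>
     (\<forall>i. Suc i < length xs \<longrightarrow> gmove tr tau E (xs ! i) (xs ! Suc i)) \<and>
     (\<forall>i. Suc i < length xs \<longrightarrow> is_D (xs ! i) \<longrightarrow> xs ! Suc i = \<sigma> (take (Suc i) xs))"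

definition inf_play :: "('s \<Rightarrow> 'a \<Rightarrow> 's \<Rightarrow> bool) \<Rightarrow> 'a \<Rightarrow> tag set \<Rightarrow> ('s, 'a) strategy
    \<Rightarrow> ('s, 'a) conf \<Rightarrow> (nat \<Rightarrow> ('s, 'a) conf) \<Rightarrow> bool" where
  "inf_play tr tau E \<sigma> g0 p \<longleftrightarrow> p 0 = g0 \<and>
     (\<forall>i. gmove tr tau E (p i) (p (Suc i))) \<and>
     (\<forall>i. is_D (p i) \<longrightarrow> p (Suc i) = \<sigma> (map p [0..<Suc i]))"

definition legal_strategy :: "('s \<Rightarrow> 'a \<Rightarrow> 's \<Rightarrow> bool) \<Rightarrow> 'a \<Rightarrow> tag set \<Rightarrow> ('s, 'a) strategy
    \<Rightarrow> ('s, 'a) conf \<Rightarrow> bool" where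
  "legal_strategy tr tau E \<sigma> g0 \<longleftrightarrow>
     (\<forall>xs. fin_play tr tau E \<sigma> g0 xs \<and> is_D (last xs) \<and> (\<exists>g. gmove tr tau E (last xs) g)
        \<longrightarrow> gmove tr tau E (last xs) (\<sigma> xs))"

definition dup_winning :: "('s \<Rightarrow> 'a \<Rightarrow> 's \<Rightarrow> bool) \<Rightarrow> 'a \<Rightarrow> tag set \<Rightarrow> ('s, 'a) strategy
    \<Rightarrow> ('s, 'a) conf \<Rightarrow> bool" where
  "dup_winning tr tau E \<sigma> g0 \<longleftrightarrow> legal_strategy tr tau E \<sigma> g0 \<and>
     (\<forall>xs. fin_play tr tau E \<sigma> g0 xs \<and> \<not> (\<exists>g. gmove tr tau E (last xs) g) \<longrightarrow> \<not> is_D (last xs)) \<and>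
     (\<forall>p. inf_play tr tau E \<sigma> g0 p \<longrightarrow> infinite {i. rew (p i) = Check})"

definition game_equiv :: "('s \<Rightarrow> 'a \<Rightarrow> 's \<Rightarrow> bool) \<Rightarrow> 'a \<Rightarrow> tag set \<Rightarrow> 's \<Rightarrow> 's \<Rightarrow> bool" where
  "game_equiv tr tau E s t \<longleftrightarrow> (\<exists>\<sigma>. dup_winning tr tau E \<sigma> (SConf (s,t) None None Star))"

definition Exy :: "mode \<Rightarrow> mode \<Rightarrow> tag set" where
  "Exy x y = (if x = Mo then {Frown} else {}) \<union> (if y = Mo then {Smile} else {})"

end

theory Submission
  imports Defs
begin


definition semi :: "('s \<Rightarrow> 'a \<Rightarrow> 's \<Rightarrow> bool) \<Rightarrow> 'a \<Rightarrow> mode \<Rightarrow> mode \<Rightarrow> ('s \<Rightarrow> 's \<Rightarrow> bool) \<Rightarrow> bool" where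
  "semi tr tau x y R \<longleftrightarrow> (\<forall>s t. R s t \<longrightarrow> R t s) \<and>
     (\<forall>s t a s'. R s t \<and> tr s a s' \<longrightarrow>
        (a = tau \<and> (\<exists>t'. wtau tr tau x R s t t' \<and> R s' t')) \<or>
        (\<exists>t' t1 t2. wtau tr tau x R s t t1 \<and> tr t1 a t2 \<and> wtau tr tau y R s' t2 t' \<and> R s' t'))"

definition Bs where "Bs tr tau x y p q \<longleftrightarrow> (\<exists>R. semi tr tau x y R \<and> R p q)"

lemma wtau_mono: "(\<And>a b. R a b \<Longrightarrow> R' a b) \<Longrightarrow> wtau tr tau x R t s s' \<Longrightarrow> wtau tr tau x R' t s s'"
  by (cases x) (auto simp: wtau_def)

lemma wtau_taus: "wtau tr tau x R t s s' \<Longrightarrow> taus tr tau s s'"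
  by (cases x) (auto simp: wtau_def)

lemma wtau_prepend: "wtau tr tau x R s b t1 \<Longrightarrow> taus tr tau t b \<Longrightarrow> R' s t \<Longrightarrow> (\<And>p q. R p q \<Longrightarrow> R' p q)
   \<Longrightarrow> wtau tr tau x R' s t t1"
  by (cases x) (auto simp: wtau_def taus_def)

lemma generic_semi:
  assumes "generic_bisim tr tau x y R" shows "semi tr tau x y R"
proof -
  have w: "\<And>s t. R s t \<Longrightarrow> wtau tr tau x R s t t" by (case_tac x) (auto simp: wtau_def taus_def)
  show ?thesis using assms w unfolding semi_def generic_bisim_def by blast
qed

abbreviation (input) Step where
  "Step tr tau x y R s t a s' \<equiv> (a = tau \<and> (\<exists>t'. wtau tr tau x R s t t' \<and> R s' t')) \<or>
        (\<exists>t' t1 t2. wtau tr tau x R s t t1 \<and> tr t1 a t2 \<and> wtau tr tau y R s' t2 t' \<and> R s' t')"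

lemma step_mono:
  assumes sub: "\<And>p q. R p q \<Longrightarrow> R' p q" and st: "Step tr tau x y R s t a s'"
  shows "Step tr tau x y R' s t a s'"
  using st
proof (elim disjE exE conjE)
  fix t' assume h: "a = tau" "wtau tr tau x R s t t'" "R s' t'"
  have "wtau tr tau x R' s t t'" using wtau_mono[where R=R and R'=R', OF sub h(2)] .
  moreover have "R' s' t'" using sub h(3) .
  ultimately show ?thesis using h(1) by blast
next
  fix t' t1 t2 assume h: "wtau tr tau x R s t t1" "tr t1 a t2" "wtau tr tau y R s' t2 t'" "R s' t'"
  have "wtau tr tau x R' s t t1" using wtau_mono[where R=R and R'=R', OF sub h(1)] .
  moreover have "wtau tr tau y R' s' t2 t'" using wtau_mono[where R=R and R'=R', OF sub h(3)] .
  moreover have "R' s' t'" using sub h(4) .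
  ultimately show ?thesis using h(2) by blast
qed

lemma step_prepend:
  assumes sub: "\<And>p q. R p q \<Longrightarrow> R' p q" and st: "Step tr tau x y R s b a s'"
    and tb: "taus tr tau t b" and R's: "R' s t"
  shows "Step tr tau x y R' s t a s'"
  using st
proof (elim disjE exE conjE)
  fix t' assume h: "a = tau" "wtau tr tau x R s b t'" "R s' t'"
  have "wtau tr tau x R' s t t'" using wtau_prepend[where R=R and R'=R', OF h(2) tb R's sub] .
  moreover have "R' s' t'" using sub h(3) .
  ultimately show ?thesis using h(1) by blast
next
  fix t' t1 t2 assume h: "wtau tr tau x R s b t1" "tr t1 a t2" "wtau tr tau y R s' t2 t'" "R s' t'"
  have "wtau tr tau x R' s t t1" using wtau_prepend[where R=R and R'=R', OF h(1) tb R's sub] .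
  moreover have "wtau tr tau y R' s' t2 t'" using wtau_mono[where R=R and R'=R', OF sub h(3)] .
  moreover have "R' s' t'" using sub h(4) .
  ultimately show ?thesis using h(2) by blast
qed

lemma semiD1: "semi tr tau x y R \<Longrightarrow> R s t \<Longrightarrow> R t s"
  unfolding semi_def by blast

lemma semiD2: assumes "semi tr tau x y R" "R s t" "tr s a s'" shows "Step tr tau x y R s t a s'"
proof -
  have "\<forall>s t a s'. R s t \<and> tr s a s' \<longrightarrow> Step tr tau x y R s t a s'"
    using assms(1) unfolding semi_def by (rule conjunct2)
  from this[rule_format, OF conjI[OF assms(2,3)]] show ?thesis .
qed

lemma semiI: assumes "\<And>s t. R s t \<Longrightarrow> R t s" "\<And>s t a s'. R s t \<Longrightarrow> tr s a s' \<Longrightarrow> Step tr tau x y R s t a s'"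
  shows "semi tr tau x y R"
  unfolding semi_def using assms by blast

lemma semi_Bs: "semi tr tau x y (Bs tr tau x y)"
proof (rule semiI)
  fix s t assume "Bs tr tau x y s t"
  then obtain R where R: "semi tr tau x y R" "R s t" unfolding Bs_def by blast
  then have "R t s" by (rule semiD1)
  then show "Bs tr tau x y t s" unfolding Bs_def using R(1) by (intro exI[of _ R] conjI)
next
  fix s t a s' assume "Bs tr tau x y s t" "tr s a s'"
  then obtain R where R: "semi tr tau x y R" "R s t" "tr s a s'" unfolding Bs_def by blast
  have sub: "\<And>p q. R p q \<Longrightarrow> Bs tr tau x y p q" using R(1) unfolding Bs_def by (intro exI[of _ R] conjI)
  from semiD2[OF R] have "Step tr tau x y R s t a s'" .
  from step_mono[where R=R and R'="Bs tr tau x y", OF sub this] show "Step tr tau x y (Bs tr tau x y) s t a s'" .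
qed

lemma semi_path:
  assumes "semi tr tau x y R" "taus tr tau p p'" "R p q"
  shows "\<exists>q'. taus tr tau q q' \<and> R p' q'"
  using assms(2,3)
  unfolding taus_def
proof (induction rule: rtranclp_induct)
  case base then show ?case by auto
next
  case (step b c)
  then obtain q' where q': "(\<lambda>u v. tr u tau v)\<^sup>*\<^sup>* q q'" "R b q'" by blast
  have st: "Step tr tau x y R b q' tau c" using semiD2[OF assms(1) q'(2) step(2)] .
  have "\<exists>t'. taus tr tau q' t' \<and> R c t'"
    using st
  proof (elim disjE exE conjE)
    fix t' assume h: "tau = tau" "wtau tr tau x R b q' t'" "R c t'"
    have "taus tr tau q' t'" using wtau_taus[OF h(2)] .
    then show ?thesis using h(3) by blast
  next
    fix t' t1 t2 assume h: "wtau tr tau x R b q' t1" "tr t1 tau t2" "wtau tr tau y R c t2 t'" "R c t'"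
    have "taus tr tau q' t1" "taus tr tau t2 t'" using wtau_taus[OF h(1)] wtau_taus[OF h(3)] .
    then have "taus tr tau q' t'" using h(2) unfolding taus_def
      by (meson rtranclp.rtrancl_into_rtrancl rtranclp_trans)
    then show ?thesis using h(4) by blast
  qed
  then obtain t' where "taus tr tau q' t'" "R c t'" by blast
  then show ?case using q'(1) unfolding taus_def by (meson rtranclp_trans)
qed

lemma Bs_stutter:
  assumes "Bs tr tau x y u a" "Bs tr tau x y u b" "taus tr tau a w" "taus tr tau w b"
  shows "Bs tr tau x y u w"
proof -
  let ?B = "Bs tr tau x y"
  define R' where "R' = (\<lambda>p q. ?B p q \<or> (\<exists>a b. ?B p a \<and> ?B p b \<and> taus tr tau a q \<and> taus tr tau q b) \<or> (\<exists>a b. ?B q a \<and> ?B q b \<and> taus tr tau a p \<and> taus tr tau p b))"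
  have BS: "semi tr tau x y ?B" by (rule semi_Bs)
  have Bsym: "\<And>p q. ?B p q \<Longrightarrow> ?B q p" using semiD1[OF BS] .
  have sub: "\<And>p q. ?B p q \<Longrightarrow> R' p q" unfolding R'_def by blast
  have tr_refl: "taus tr tau q q" for q unfolding taus_def by simp
  have "semi tr tau x y R'"
  proof (rule semiI)
    fix s t assume "R' s t" then show "R' t s" unfolding R'_def using Bsym by blast
  next
    fix s t c s' assume h: "R' s t" "tr s c s'"
    have "\<exists>t0. taus tr tau t t0 \<and> ?B s t0"
    proof -
      consider "?B s t" | "\<exists>a b. ?B s a \<and> ?B s b \<and> taus tr tau a t \<and> taus tr tau t b"
        | "\<exists>a b. ?B t a \<and> ?B t b \<and> taus tr tau a s \<and> taus tr tau s b"
        using h unfolding R'_def by blast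
      then show ?thesis
      proof cases
        case 1 then show ?thesis using tr_refl by blast
      next
        case 2 then show ?thesis by blast
      next
        case 3
        then obtain a where ab: "?B t a" "taus tr tau a s" by blast
        from semi_path[OF BS ab(2) Bsym[OF ab(1)]] show ?thesis by blast
      qed
    qed
    then obtain t0 where t0: "taus tr tau t t0" "?B s t0" by blast
    have "Step tr tau x y ?B s t0 c s'" using semiD2[OF BS t0(2) h(2)] .
    from step_prepend[where R="?B" and R'=R', OF sub this t0(1) h(1)]
    show "Step tr tau x y R' s t c s'" .
  qed
  moreover have "R' u w" unfolding R'_def using assms by blast
  ultimately show ?thesis unfolding Bs_def by (intro exI[of _ R'] conjI)
qed



locale gm =
  fixes tr :: "'s \<Rightarrow> 'a \<Rightarrow> 's \<Rightarrow> bool" and tau :: 'a and x y :: mode and Q :: "'s \<Rightarrow> 's \<Rightarrow> bool"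
  assumes Qsym: "Q p q \<Longrightarrow> Q q p"
    and Qstut: "x = Mb \<Longrightarrow> Q u a \<Longrightarrow> Q u b \<Longrightarrow> taus tr tau a w \<Longrightarrow> taus tr tau w b \<Longrightarrow> Q u w"
    and Qtr: "Q s t \<Longrightarrow> tr s c s' \<Longrightarrow> Step tr tau x y Q s t c s'"
begin

definition reach :: "nat \<Rightarrow> 's \<Rightarrow> ('s \<Rightarrow> bool) \<Rightarrow> bool" where
  "reach n v P \<longleftrightarrow> (\<exists>w. ((\<lambda>a b. tr a tau b) ^^ n) v w \<and> P w)"
definition dst :: "('s \<Rightarrow> bool) \<Rightarrow> 's \<Rightarrow> nat" where "dst P v = (LEAST n. reach n v P)"
definition SOK where "SOK u' t2 \<longleftrightarrow> Q u' t2 \<or> (y = Mo \<and> (\<exists>t'. taus tr tau t2 t' \<and> Q u' t'))"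
definition FinF where "FinF u a u' w \<longleftrightarrow> (x = Mb \<longrightarrow> Q u w) \<and> ((a = tau \<and> Q u' w) \<or> (\<exists>t2. tr w a t2 \<and> SOK u' t2))"
definition P1 where "P1 u' w \<longleftrightarrow> (\<exists>w'. tr w tau w' \<and> Q u' w')"
definition nxt where "nxt P v = (SOME w. tr v tau w \<and> (\<exists>m. reach m w P) \<and> dst P w < dst P v)"

lemma reach0: "reach 0 v P \<longleftrightarrow> P v" by (simp add: reach_def)

lemma reach_taus: "reach n v P \<Longrightarrow> \<exists>w. taus tr tau v w \<and> P w"
  unfolding reach_def taus_def using relpowp_imp_rtranclp by metis

lemma taus_reach: "taus tr tau v w \<Longrightarrow> P w \<Longrightarrow> \<exists>n. reach n v P"
  unfolding reach_def taus_def using rtranclp_imp_relpowp by metis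

lemma nxt_prop:
  assumes "reach n v P" "\<not> P v"
  shows "tr v tau (nxt P v) \<and> (\<exists>m. reach m (nxt P v) P) \<and> dst P (nxt P v) < dst P v"
proof -
  have r: "reach (dst P v) v P" unfolding dst_def using assms(1) by (rule LeastI)
  then obtain k where k: "dst P v = Suc k" using assms(2) by (cases "dst P v") (auto simp: reach0)
  from r k obtain z where "((\<lambda>a b. tr a tau b) ^^ Suc k) v z" "P z" unfolding reach_def by auto
  then obtain w where w: "tr v tau w" "((\<lambda>a b. tr a tau b) ^^ k) w z" using relpowp_Suc_D2 by metis
  then have rw: "reach k w P" using \<open>P z\<close> unfolding reach_def by auto
  then have "dst P w \<le> k" unfolding dst_def by (rule Least_le)
  then have "\<exists>w. tr v tau w \<and> (\<exists>m. reach m w P) \<and> dst P w < dst P v" using w(1) rw k by auto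
  then show ?thesis unfolding nxt_def by (rule someI_ex)
qed

lemma initD: assumes "Q u v" "tr u a u'" shows "\<exists>n. reach n v (FinF u a u')"
  using Qtr[OF assms]
proof (elim disjE exE conjE)
  fix t' assume h: "a = tau" "wtau tr tau x Q u v t'" "Q u' t'"
  have "FinF u a u' t'" using h unfolding FinF_def by (cases x) (auto simp: wtau_def)
  then show ?thesis using taus_reach wtau_taus[OF h(2)] by blast
next
  fix t' t1 t2 assume h: "wtau tr tau x Q u v t1" "tr t1 a t2" "wtau tr tau y Q u' t2 t'" "Q u' t'"
  have "SOK u' t2" using h(3,4) unfolding SOK_def by (cases y) (auto simp: wtau_def)
  then have "FinF u a u' t1" using h(1,2) unfolding FinF_def by (cases x) (auto simp: wtau_def)
  then show ?thesis using taus_reach wtau_taus[OF h(1)] by blast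
qed

definition mv where "mv u v a u' vb f =
   (if f = Frown then
      (if FinF u a u' vb then
         (if a = tau \<and> Q u' vb then SConf (u',vb) None None Check
          else (if Q u' (SOME t2. tr vb a t2 \<and> SOK u' t2) then SConf (u', SOME t2. tr vb a t2 \<and> SOK u' t2) None None Check
                else SConf (u,v) (Some (a,u')) (Some (SOME t2. tr vb a t2 \<and> SOK u' t2, Smile)) Star))
       else (if x = Mb then SConf (u, nxt (FinF u a u') vb) (Some (a,u')) (Some (nxt (FinF u a u') vb, Frown)) Star
             else SConf (u,v) (Some (a,u')) (Some (nxt (FinF u a u') vb, Frown)) Star))
    else
      (if P1 u' vb then SConf (u', SOME w. tr vb tau w \<and> Q u' w) None None Check
       else SConf (u,v) (Some (a,u')) (Some (nxt (P1 u') vb, Smile)) Star))"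

fun move :: "('s,'a) conf \<Rightarrow> ('s,'a) conf" where
  "move (DConf (u,v) (Some (a,u')) (Some (vb,f)) r) = mv u v a u' vb f"
| "move c = c"

fun key :: "('s,'a) conf \<Rightarrow> ('s \<times> 's) \<times> ('a \<times> 's) option \<times> ('s \<times> tag) option" where
  "key (SConf p c m r) = (p,c,m)" | "key (DConf p c m r) = (p,c,m)"

fun muk :: "('s \<times> 's) \<times> ('a \<times> 's) option \<times> ('s \<times> tag) option \<Rightarrow> nat \<times> nat" where
  "muk ((u,v), Some (a,u'), Some (vb,f)) = (if f = Frown then (1, dst (FinF u a u') vb) else (0, dst (P1 u') vb))"
| "muk _ = (0,0)"

definition GoodD where "GoodD c \<longleftrightarrow> (\<exists>u v a u' vb f r. c = DConf (u,v) (Some (a,u')) (Some (vb,f)) r \<and> Q u v \<and>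
   (f = Frown \<longrightarrow> (x = Mb \<longrightarrow> vb = v) \<and> (\<exists>n. reach n vb (FinF u a u'))) \<and>
   (f = Smile \<longrightarrow> y = Mo \<and> (\<exists>n. reach n vb (P1 u'))))"

definition GoodS where "GoodS c \<longleftrightarrow> (\<exists>u v cc m r. c = SConf (u,v) cc m r \<and> Q u v \<and> (cc \<noteq> None \<longrightarrow> GoodD (DConf (u,v) cc m Star)))"

lemma GoodD_init: "Q u v \<Longrightarrow> tr u a u' \<Longrightarrow> GoodD (DConf (u,v) (Some (a,u')) (Some (v,Frown)) r)"
  unfolding GoodD_def using initD by blast

lemma goodS_step: assumes "GoodS c" "gmove tr tau (Exy x y) c d" shows "GoodD d"
proof -
  obtain u v cc m r where c: "c = SConf (u,v) cc m r" "Q u v" "cc \<noteq> None \<longrightarrow> GoodD (DConf (u,v) cc m Star)"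
    using assms(1) unfolding GoodS_def by blast
  from assms(2) c show ?thesis
    by (cases rule: gmove.cases) (auto intro: GoodD_init Qsym)
qed


abbreviation lexr :: "((nat \<times> nat) \<times> (nat \<times> nat)) set" where "lexr \<equiv> less_than <*lex*> less_than"

lemma goodD_step:
  assumes "GoodD c"
  shows "gmove tr tau (Exy x y) c (move c) \<and> GoodS (move c) \<and>
    (rew (move c) = Star \<longrightarrow> (\<exists>p cc m. move c = SConf p cc m Star \<and> cc \<noteq> None \<and> (muk (p,cc,m), muk (key c)) \<in> lexr))"
proof -
  obtain u v a u' vb f r where c: "c = DConf (u,v) (Some (a,u')) (Some (vb,f)) r" and Quv: "Q u v"
    and F1: "f = Frown \<longrightarrow> (x = Mb \<longrightarrow> vb = v) \<and> (\<exists>n. reach n vb (FinF u a u'))"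
    and F2: "f = Smile \<longrightarrow> y = Mo \<and> (\<exists>n. reach n vb (P1 u'))"
    using assms unfolding GoodD_def by blast
  have mc: "move c = mv u v a u' vb f" using c by simp
  note mc' = mc[unfolded mv_def]
  let ?E = "Exy x y"
  show ?thesis
  proof (cases f)
    case Frown
    with F1 have xv: "x = Mb \<longrightarrow> vb = v" and rn: "\<exists>n. reach n vb (FinF u a u')" by auto
    show ?thesis
    proof (cases "FinF u a u' vb")
      case fin: True
      show ?thesis
      proof (cases "a = tau \<and> Q u' vb")
        case True
        then have m: "move c = SConf (u',vb) None None Check" using mc fin Frown by (simp add: mv_def)
        have "gmove tr tau ?E c (SConf (u',vb) None None Check)" unfolding c using True by (intro gmove.D1) auto
        moreover have "GoodS (SConf (u',vb) None None Check)" unfolding GoodS_def using True by auto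
        ultimately show ?thesis using m by simp
      next
        case nt: False
        define t2 where "t2 = (SOME t2. tr vb a t2 \<and> SOK u' t2)"
        have "\<exists>t2. tr vb a t2 \<and> SOK u' t2" using fin nt unfolding FinF_def by blast
        then have t2: "tr vb a t2" "SOK u' t2" unfolding t2_def by (metis (mono_tags, lifting) someI_ex)+
        show ?thesis
        proof (cases "Q u' t2")
          case True
          then have m: "move c = SConf (u',t2) None None Check" using mc fin Frown nt by (simp add: mv_def t2_def)
          have "gmove tr tau ?E c (SConf (u',t2) None None Check)" unfolding c using t2 Frown by (intro gmove.D2b) auto
          moreover have "GoodS (SConf (u',t2) None None Check)" unfolding GoodS_def using True by auto
          ultimately show ?thesis using m by simp
        next
          case False
          then have m: "move c = SConf (u,v) (Some (a,u')) (Some (t2,Smile)) Star" using mc fin Frown nt by (simp add: mv_def t2_def)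
          from False t2(2) obtain t' where ym: "y = Mo" and t': "taus tr tau t2 t'" "Q u' t'" unfolding SOK_def by blast
          have "t2 \<noteq> t'" using False t'(2) by blast
          then obtain z where z: "taus tr tau t2 z" "tr z tau t'" using t'(1) unfolding taus_def
            by (metis rtranclp.cases)
          have "P1 u' z" unfolding P1_def using z(2) t'(2) by blast
          then have rz: "\<exists>n. reach n t2 (P1 u')" using taus_reach z(1) by blast
          have "gmove tr tau ?E c (SConf (u,v) (Some (a,u')) (Some (t2,Smile)) Star)" unfolding c using t2 Frown ym
            by (intro gmove.D2c) (auto simp: Exy_def)
          moreover have "GoodS (SConf (u,v) (Some (a,u')) (Some (t2,Smile)) Star)" unfolding GoodS_def GoodD_def
            using Quv ym rz by auto
          moreover have "(muk ((u,v), Some (a,u'), Some (t2,Smile)), muk (key c)) \<in> lexr" using c Frown by simp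
          ultimately show ?thesis using m by auto
        qed
      qed
    next
      case nfin: False
      define w where "w = nxt (FinF u a u') vb"
      obtain n where "reach n vb (FinF u a u')" using rn by blast
      from nxt_prop[OF this nfin] have w: "tr vb tau w" "\<exists>m. reach m w (FinF u a u')"
        "dst (FinF u a u') w < dst (FinF u a u') vb" unfolding w_def by auto
      show ?thesis
      proof (cases x)
        case Mb
        then have m: "move c = SConf (u,w) (Some (a,u')) (Some (w,Frown)) Star" using mc' nfin Frown by (simp add: w_def)
        obtain t1 where t1: "taus tr tau w t1" "FinF u a u' t1" using w(2) reach_taus by blast
        have "Q u t1" using t1(2) Mb unfolding FinF_def by simp
        moreover have "Q u vb" using xv Mb Quv by simp
        moreover have "taus tr tau vb w" using w(1) unfolding taus_def by (rule r_into_rtranclp)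
        ultimately have Quw: "Q u w" using Qstut[OF Mb] t1(1) by blast
        have "gmove tr tau ?E c (SConf (u,w) (Some (a,u')) (Some (w,Frown)) Star)" unfolding c Frown using w(1)
          by (intro gmove.D3a) auto
        moreover have "GoodS (SConf (u,w) (Some (a,u')) (Some (w,Frown)) Star)" unfolding GoodS_def GoodD_def
          using Quw w(2) by auto
        moreover have "(muk ((u,w), Some (a,u'), Some (w,Frown)), muk (key c)) \<in> lexr" using c Frown w(3) by simp
        ultimately show ?thesis using m by auto
      next
        case Mo
        then have m: "move c = SConf (u,v) (Some (a,u')) (Some (w,Frown)) Star" using mc' nfin Frown by (simp add: w_def)
        have "gmove tr tau ?E c (SConf (u,v) (Some (a,u')) (Some (w,Frown)) Star)" unfolding c Frown using w(1) Mo
          by (intro gmove.D3c) (auto simp: Exy_def)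
        moreover have "GoodS (SConf (u,v) (Some (a,u')) (Some (w,Frown)) Star)" unfolding GoodS_def GoodD_def
          using Quv w(2) Mo by auto
        moreover have "(muk ((u,v), Some (a,u'), Some (w,Frown)), muk (key c)) \<in> lexr" using c Frown w(3) by simp
        ultimately show ?thesis using m by auto
      qed
    qed
  next
    case Smile
    with F2 have ym: "y = Mo" and rn: "\<exists>n. reach n vb (P1 u')" by auto
    show ?thesis
    proof (cases "P1 u' vb")
      case True
      define w where "w = (SOME w. tr vb tau w \<and> Q u' w)"
      have w: "tr vb tau w" "Q u' w" using True unfolding P1_def w_def by (metis (mono_tags, lifting) someI_ex)+
      have m: "move c = SConf (u',w) None None Check" using mc True Smile by (simp add: mv_def w_def)
      have "gmove tr tau ?E c (SConf (u',w) None None Check)" unfolding c using w(1) Smile by (intro gmove.D3b) auto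
      moreover have "GoodS (SConf (u',w) None None Check)" unfolding GoodS_def using w(2) by auto
      ultimately show ?thesis using m by simp
    next
      case np: False
      define w where "w = nxt (P1 u') vb"
      obtain n where "reach n vb (P1 u')" using rn by blast
      from nxt_prop[OF this np] have w: "tr vb tau w" "\<exists>m. reach m w (P1 u')"
        "dst (P1 u') w < dst (P1 u') vb" unfolding w_def by auto
      have m: "move c = SConf (u,v) (Some (a,u')) (Some (w,Smile)) Star" using mc np Smile by (simp add: mv_def w_def)
      have "gmove tr tau ?E c (SConf (u,v) (Some (a,u')) (Some (w,Smile)) Star)" unfolding c Smile using w(1) ym
        by (intro gmove.D3c) (auto simp: Exy_def)
      moreover have "GoodS (SConf (u,v) (Some (a,u')) (Some (w,Smile)) Star)" unfolding GoodS_def GoodD_def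
        using Quv w(2) ym by auto
      moreover have "(muk ((u,v), Some (a,u'), Some (w,Smile)), muk (key c)) \<in> lexr" using c Smile w(3) by simp
      ultimately show ?thesis using m by auto
    qed
  qed
qed

end


lemma gmove_alt: "gmove tr tau E c d \<Longrightarrow> is_D d \<longleftrightarrow> \<not> is_D c" by (erule gmove.cases) auto

lemma S1_only: "gmove tr tau E (SConf p cc m r) d \<Longrightarrow> cc \<noteq> None \<Longrightarrow> rew d = Star \<Longrightarrow> d = DConf p cc m Star"
  by (erule gmove.cases) auto

context gm begin

definition Good where "Good c \<longleftrightarrow> GoodS c \<or> GoodD c"
lemma GoodS_notD: "GoodS c \<Longrightarrow> \<not> is_D c" unfolding GoodS_def by auto
lemma GoodD_D: "GoodD c \<Longrightarrow> is_D c" unfolding GoodD_def by auto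

definition sigma :: "('s,'a) strategy" where "sigma xs = move (last xs)"

lemma good_step: assumes "Good c" "gmove tr tau (Exy x y) c d" "is_D c \<Longrightarrow> d = move c" shows "Good d"
proof (cases "GoodS c")
  case True then show ?thesis using goodS_step assms(2) unfolding Good_def by blast
next
  case False
  then have "GoodD c" using assms(1) unfolding Good_def by blast
  then show ?thesis using goodD_step GoodD_D assms(3) unfolding Good_def by metis
qed

lemma fin_good: assumes "fin_play tr tau (Exy x y) sigma g0 xs" "Good g0" "i < length xs" shows "Good (xs ! i)"
  using assms(3)
proof (induction i)
  case 0 then show ?case using assms(1,2) unfolding fin_play_def by (metis hd_conv_nth)
next
  case (Suc i)
  then have i: "i < length xs" by simp
  have Gi: "Good (xs ! i)" using Suc.IH i by simp
  have mvv: "gmove tr tau (Exy x y) (xs ! i) (xs ! Suc i)" using assms(1) Suc.prems unfolding fin_play_def by blast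
  have "xs ! Suc i = move (xs ! i)" if D: "is_D (xs ! i)"
  proof -
    have "xs ! Suc i = sigma (take (Suc i) xs)" using assms(1) Suc.prems D unfolding fin_play_def by blast
    also have "\<dots> = move (xs ! i)" unfolding sigma_def using i by (simp add: take_Suc_conv_app_nth)
    finally show ?thesis .
  qed
  then show ?case using good_step[OF Gi mvv] by blast
qed

lemma inf_good: assumes "inf_play tr tau (Exy x y) sigma g0 p" "Good g0" shows "Good (p i)"
proof (induction i)
  case 0 then show ?case using assms unfolding inf_play_def by simp
next
  case (Suc i)
  have mvv: "gmove tr tau (Exy x y) (p i) (p (Suc i))" using assms(1) unfolding inf_play_def by blast
  have "p (Suc i) = move (p i)" if D: "is_D (p i)"
  proof -
    have "p (Suc i) = sigma (map p [0..<Suc i])" using assms(1) D unfolding inf_play_def by blast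
    then show ?thesis unfolding sigma_def by simp
  qed
  then show ?case using good_step[OF Suc.IH mvv] by blast
qed

lemma main: assumes "Q s t" shows "dup_winning tr tau (Exy x y) sigma (SConf (s,t) None None Star)"
proof -
  let ?g0 = "SConf (s,t) None None Star :: ('s,'a) conf"
  let ?E = "Exy x y"
  have G0: "Good ?g0" unfolding Good_def GoodS_def using assms by auto
  have lastG: "GoodD (last xs)" if fp: "fin_play tr tau ?E sigma ?g0 xs" and D: "is_D (last xs)" for xs
  proof -
    have ne: "xs \<noteq> []" using fp unfolding fin_play_def by blast
    then have "last xs = xs ! (length xs - 1)" by (simp add: last_conv_nth)
    moreover have "Good (xs ! (length xs - 1))" using fin_good[OF fp G0] ne by simp
    ultimately show ?thesis using D GoodS_notD unfolding Good_def by metis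
  qed
  have L: "legal_strategy tr tau ?E sigma ?g0"
    unfolding legal_strategy_def
  proof (intro allI impI)
    fix xs assume h: "fin_play tr tau ?E sigma ?g0 xs \<and> is_D (last xs) \<and> (\<exists>g. gmove tr tau ?E (last xs) g)"
    then have "GoodD (last xs)" using lastG by blast
    then show "gmove tr tau ?E (last xs) (sigma xs)" unfolding sigma_def using goodD_step by blast
  qed
  have St: "\<forall>xs. fin_play tr tau ?E sigma ?g0 xs \<and> \<not> (\<exists>g. gmove tr tau ?E (last xs) g) \<longrightarrow> \<not> is_D (last xs)"
  proof (intro allI impI notI)
    fix xs assume h: "fin_play tr tau ?E sigma ?g0 xs \<and> \<not> (\<exists>g. gmove tr tau ?E (last xs) g)" and D: "is_D (last xs)"
    then have "GoodD (last xs)" using lastG by blast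
    then have "gmove tr tau ?E (last xs) (move (last xs))" using goodD_step by blast
    then show False using h by blast
  qed
  have I: "\<forall>p. inf_play tr tau ?E sigma ?g0 p \<longrightarrow> infinite {i. rew (p i) = Check}"
  proof (intro allI impI)
    fix p assume ip: "inf_play tr tau ?E sigma ?g0 p"
    show "infinite {i. rew (p i) = Check}"
    proof
      assume fin: "finite {i. rew (p i) = Check}"
      then obtain N where "\<forall>i\<in>{i. rew (p i) = Check}. i < N" using finite_nat_set_iff_bounded by blast
      then have N: "rew (p i) = Star" if "N \<le> i" for i using that by (cases "rew (p i)") auto
      have G: "Good (p i)" for i using inf_good[OF ip G0] .
      have mvs: "gmove tr tau ?E (p i) (p (Suc i))" for i using ip unfolding inf_play_def by blast
      have Dst: "p (Suc i) = move (p i)" if "is_D (p i)" for i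
        using ip that unfolding inf_play_def sigma_def by simp
      have claim: "is_D (p (Suc (Suc i))) \<and> (muk (key (p (Suc (Suc i)))), muk (key (p i))) \<in> lexr"
        if Ni: "N \<le> i" and D: "is_D (p i)" for i
      proof -
        have GD: "GoodD (p i)" using G[of i] D GoodS_notD unfolding Good_def by blast
        have "rew (move (p i)) = Star" using N[of "Suc i"] Ni Dst[OF D] by simp
        then obtain pp cc m where pm: "move (p i) = SConf pp cc m Star" "cc \<noteq> None"
          "(muk (pp,cc,m), muk (key (p i))) \<in> lexr" using goodD_step[OF GD] by blast
        have "gmove tr tau ?E (SConf pp cc m Star) (p (Suc (Suc i)))" using mvs[of "Suc i"] Dst[OF D] pm(1) by simp
        then have "p (Suc (Suc i)) = DConf pp cc m Star" using S1_only pm(2) N[of "Suc (Suc i)"] Ni by simp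
        then show ?thesis using pm(3) by simp
      qed
      obtain i0 where i0: "N \<le> i0" "is_D (p i0)"
      proof (cases "is_D (p N)")
        case True then show ?thesis using that by blast
      next
        case False then have "is_D (p (Suc N))" using gmove_alt[OF mvs[of N]] by simp
        then show ?thesis using that[of "Suc N"] by simp
      qed
      have Dk: "is_D (p (i0 + 2 * k))" for k
      proof (induction k)
        case 0 then show ?case using i0 by simp
      next
        case (Suc k)
        have "N \<le> i0 + 2 * k" using i0 by simp
        from claim[OF this Suc.IH] show ?case by (simp add: numeral_2_eq_2)
      qed
      define f where "f k = muk (key (p (i0 + 2 * k)))" for k
      have "(f (Suc k), f k) \<in> lexr" for k
      proof -
        have "N \<le> i0 + 2 * k" using i0 by simp
        from claim[OF this Dk[of k]] show ?thesis unfolding f_def by (simp add: numeral_2_eq_2)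
      qed
      moreover have "wf lexr" by (intro wf_lex_prod wf_less_than)
      ultimately show False using wf_iff_no_infinite_down_chain by blast
    qed
  qed
  show ?thesis unfolding dup_winning_def using L St I by blast
qed

end

theorem lemma5p5:
  fixes tr :: "'s \<Rightarrow> 'a \<Rightarrow> 's \<Rightarrow> bool" and tau :: 'a
    and x y :: mode and s t :: 's
  assumes "gbisimilar tr tau x y s t"
  shows "game_equiv tr tau (Exy x y) s t"
proof -
  obtain R where R: "generic_bisim tr tau x y R" "R s t" using assms unfolding gbisimilar_def by blast
  let ?Q = "Bs tr tau x y"
  have sem: "semi tr tau x y ?Q" by (rule semi_Bs)
  interpret G: gm tr tau x y ?Q
  proof
    fix p q assume "?Q p q" then show "?Q q p" using semiD1[OF sem] by blast
  next
    fix u a b w assume "?Q u a" "?Q u b" "taus tr tau a w" "taus tr tau w b"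
    then show "?Q u w" by (rule Bs_stutter)
  next
    fix s t c s' assume "?Q s t" "tr s c s'"
    then show "Step tr tau x y ?Q s t c s'" by (rule semiD2[OF sem])
  qed
  have "?Q s t" unfolding Bs_def using generic_semi[OF R(1)] R(2) by (intro exI[of _ R] conjI)
  then show ?thesis unfolding game_equiv_def using G.main by blast
qed


end
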